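(* Let $\Lambda$ be a complex $m\times N$ matrix and let $\pi$ be an $N\times N$ real diagonal matrix with strictly positive diagonal entries. Let $\Gamma_{mp}$ be the Moore–Penrose inverse of $\Lambda$, let $M:=\Gamma_{mp}\Lambda$ (so $M=M^\dagger=M^2$), and define $$\Gamma_{opt}:=\Gamma_{mp}-\big[(I-M)\pi(I-M)\big]^{\ddagger}\,\pi M\,\Gamma_{mp},$$ where $X^{\ddagger}$ denotes the Moore–Penrose inverse of $X$ and $I$ is the $N\times N$ identity. Then $\Gamma_{opt}$ is a minimum norm g-inverse of $\Lambda$ with respect to $\pi$, i.e. $\Lambda\Gamma_{opt}\Lambda=\Lambda$ and $\pi\Gamma_{opt}\Lambda=\Lambda^\dagger\Gamma_{opt}^\dagger\pi$.
   Context: $\dagger$ denotes the conjugate transpose. The Moore–Penrose inverse $\Gamma_{mp}$ of $\Lambda$ is the unique $N\times m$ matrix satisfying $\Lambda\Gamma_{mp}\Lambda=\Lambda$, $\Gamma_{mp}\Lambda\Gamma_{mp}=\Gamma_{mp}$, $(\Gamma_{mp}\Lambda)^\dagger=\Gamma_{mp}\Lambda$, $(\Lambda\Gamma_{mp})^\dagger=\Lambda\Gamma_{mp}$. A g-inverse of $\Lambda$ is any $N\times m$ matrix $\Gamma$ with $\Lambda\Gamma\Lambda=\Lambda$. *)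

theory Defs
  imports "HOL-Analysis.Analysis"
begin

definition cadj :: "complex ^'n ^'m \<Rightarrow> complex ^'m ^'n" where
  "cadj A = (\<chi> i j. cnj (A $ j $ i))"

definition is_mp_inverse :: "complex ^'n ^'m \<Rightarrow> complex ^'m ^'n \<Rightarrow> bool" where
  "is_mp_inverse A G \<longleftrightarrow>
     A ** G ** A = A \<and> G ** A ** G = G \<and>
     cadj (G ** A) = G ** A \<and> cadj (A ** G) = A ** G"

definition mp_inverse :: "complex ^'n ^'m \<Rightarrow> complex ^'m ^'n" where
  "mp_inverse A = (THE G. is_mp_inverse A G)"

end

theory Submission
  imports Defs
begin


lemma cadj_nth[simp]: "cadj A $ i $ j = cnj (A $ j $ i)"
  by (simp add: cadj_def)

lemma cadj_cadj[simp]: "cadj (cadj A) = A"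
  by (simp add: vec_eq_iff)

lemma cadj_mult: "cadj (A ** B) = cadj B ** cadj A"
  by (simp add: vec_eq_iff matrix_matrix_mult_def mult.commute)

lemma cadj_add: "cadj (A + B) = cadj A + cadj B"
  by (simp add: vec_eq_iff)

lemma cadj_diff: "cadj (A - B) = cadj A - cadj B"
  by (simp add: vec_eq_iff)

lemma cadj_zero[simp]: "cadj 0 = 0"
  by (simp add: vec_eq_iff)

lemma cadj_mat1[simp]: "cadj (mat 1) = mat 1"
  by (simp add: vec_eq_iff mat_def)

lemma cadj_scaleR: "cadj (c *\<^sub>R A) = c *\<^sub>R cadj A"
  by (simp add: vec_eq_iff)

lemma matrix_add_rdistrib: "((B + C) ** A) = (B ** A) + (C ** A)"
  by (simp add: vec_eq_iff matrix_matrix_mult_def sum.distrib distrib_right)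

lemma matrix_sub_ldistrib: "(A ** (B - C)) = (A ** B) - (A ** (C::'a::ring_1^_^_))"
  by (simp add: vec_eq_iff matrix_matrix_mult_def sum_subtractf right_diff_distrib)

lemma matrix_sub_rdistrib: "((B - C) ** A) = (B ** A) - (C ** (A::'a::ring_1^_^_))"
  by (simp add: vec_eq_iff matrix_matrix_mult_def sum_subtractf left_diff_distrib)

lemma cadj_pd_zero:
  fixes Z :: "complex^'n^'m" and \<pi> :: "complex^'m^'m"
  assumes diag: "\<forall>i j. i \<noteq> j \<longrightarrow> \<pi> $ i $ j = 0"
    and pos: "\<forall>i. \<pi> $ i $ i \<in> \<real> \<and> Re (\<pi> $ i $ i) > 0"
    and z: "cadj Z ** \<pi> ** Z = 0"
  shows "Z = 0"
proof -
  have "Z $ i $ j = 0" for i j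
  proof -
    have e: "(cadj Z ** \<pi> ** Z) $ j $ j = (\<Sum>k\<in>UNIV. cnj (Z $ k $ j) * \<pi> $ k $ k * Z $ k $ j)"
      unfolding matrix_matrix_mult_def
      apply simp
      apply (rule sum.cong, simp)
      apply (subst sum.remove[of UNIV], simp, simp)
      apply (subst sum.neutral) using diag by auto
    have "Re (\<Sum>k\<in>UNIV. cnj (Z $ k $ j) * \<pi> $ k $ k * Z $ k $ j) = 0"
      using z e by simp
    hence "(\<Sum>k\<in>UNIV. Re (\<pi> $ k $ k) * (cmod (Z $ k $ j))^2) = 0"
    proof -
      have "cnj (Z $ k $ j) * \<pi> $ k $ k * Z $ k $ j = of_real (Re (\<pi> $ k $ k) * (cmod (Z $ k $ j))^2)" for k
      proof -
        obtain r where r: "\<pi> $ k $ k = of_real r" using pos by (metis Reals_cases)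
        show ?thesis using complex_norm_square[of "Z$k$j"] by (simp add: r mult_ac)
      qed
      thus "Re (\<Sum>k\<in>UNIV. cnj (Z $ k $ j) * \<pi> $ k $ k * Z $ k $ j) = 0 \<Longrightarrow> ?thesis"
        by simp
    qed
    hence "\<forall>k\<in>UNIV. Re (\<pi> $ k $ k) * (cmod (Z $ k $ j))^2 = 0"
    proof (subst sum_nonneg_eq_0_iff[symmetric])
      show "\<And>x. x \<in> UNIV \<Longrightarrow> 0 \<le> Re (\<pi> $ x $ x) * (cmod (Z $ x $ j))\<^sup>2"
        using pos by (simp add: less_imp_le)
    qed (use \<open>(\<Sum>k\<in>UNIV. _) = 0\<close> in auto)
    thus ?thesis using pos by (metis less_irrefl mult_eq_0_iff power_eq_0_iff norm_eq_zero iso_tuple_UNIV_I)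
  qed
  thus ?thesis by (simp add: vec_eq_iff)
qed

lemma cadj_self_zero:
  fixes Z :: "complex^'n^'m"
  assumes "cadj Z ** Z = 0" shows "Z = 0"
proof (rule cadj_pd_zero[of "mat 1" Z])
  show "cadj Z ** mat 1 ** Z = 0" using assms by simp
qed (auto simp: mat_def)



fun mpow :: "complex^'n^'n \<Rightarrow> nat \<Rightarrow> complex^'n^'n" where
  "mpow B 0 = mat 1" | "mpow B (Suc k) = B ** mpow B k"

lemma mpow_add: "mpow B (i + j) = mpow B i ** mpow B j"
  by (induction i) (simp_all add: matrix_mul_assoc)

lemma mpow_comm: "B ** mpow B k = mpow B k ** B"
  by (induction k) (simp_all, metis matrix_mul_assoc)

lemma mpow_herm: "cadj B = B \<Longrightarrow> cadj (mpow B k) = mpow B k"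
  by (induction k) (simp_all add: cadj_mult mpow_comm)

lemma herm_cancel:
  assumes "cadj B = B" "B ** B ** W = 0" shows "B ** W = 0"
proof (rule cadj_self_zero)
  show "cadj (B ** W) ** (B ** W) = 0"
    using assms by (simp add: cadj_mult) (metis matrix_mul_assoc times0_right)
qed

lemma herm_cancel_pow:
  assumes "cadj B = B" shows "mpow B (Suc j) ** Z = 0 \<Longrightarrow> B ** Z = 0"
proof (induction j arbitrary: Z)
  case 0 then show ?case by simp
next
  case (Suc j)
  have "B ** B ** (mpow B j ** Z) = 0" using Suc.prems by (simp add: matrix_mul_assoc)
  hence "B ** (mpow B j ** Z) = 0" by (rule herm_cancel[OF assms])
  hence "mpow B (Suc j) ** Z = 0" by (simp add: matrix_mul_assoc)
  thus ?case by (rule Suc.IH)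
qed

lemma dim_stab:
  fixes d :: "nat \<Rightarrow> nat"
  assumes "\<And>k. d (Suc k) \<le> d k"
  shows "\<exists>k. d k \<le> d (Suc k)"
proof (rule ccontr)
  assume "\<not> ?thesis"
  hence lt: "\<And>k. d (Suc k) < d k" by (meson not_le)
  have "d k + k \<le> d 0" for k
  proof (induction k)
    case (Suc k)
    have "d (Suc k) < d k" by (rule lt)
    thus ?case using Suc.IH by simp
  qed simp
  from this[of "Suc (d 0)"] show False by simp
qed

lemma key_poly:
  fixes B :: "complex^'n^'n"
  assumes cB: "cadj B = B"
  shows "\<exists>T. cadj T = T \<and> T ** B = B ** T \<and> B = B ** B ** T"
proof -
  define gen where "gen k = range (\<lambda>j. mpow B (k + j))" for k
  have sub: "gen (Suc k) \<subseteq> gen k" for k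
    unfolding gen_def by (rule image_subsetI) (metis add_Suc_shift rangeI)
  obtain k where k: "dim (gen k) \<le> dim (gen (Suc k))"
    using dim_stab[of "\<lambda>k. dim (gen k)"] dim_subset[OF sub] by blast
  have sp: "span (gen (Suc k)) = span (gen k)" by (rule dim_eq_span[OF sub k])
  have "mpow B k \<in> span (gen (Suc k))"
    unfolding sp by (rule span_base) (auto simp: gen_def image_iff intro: exI[of _ 0])
  moreover
  define S where "S = {Y. \<exists>T. cadj T = T \<and> T ** B = B ** T \<and> Y = mpow B (Suc k) ** T}"
  have "span (gen (Suc k)) \<subseteq> S"
  proof (rule span_minimal)
    show "gen (Suc k) \<subseteq> S"
    proof
      fix Y assume "Y \<in> gen (Suc k)"
      then obtain j where "Y = mpow B (Suc k + j)" by (auto simp: gen_def)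
      hence "Y = mpow B (Suc k) ** mpow B j" by (simp only: mpow_add)
      thus "Y \<in> S" unfolding S_def using mpow_herm[OF cB, of j] mpow_comm[of B j] by (intro CollectI exI[of _ "mpow B j"]) simp
    qed
    show "subspace S"
      unfolding subspace_def
    proof (intro conjI ballI allI)
      show "0 \<in> S" unfolding S_def by (auto intro!: exI[of _ 0])
    next
      fix x y assume "x \<in> S" "y \<in> S"
      then obtain T1 T2 where "cadj T1 = T1" "T1 ** B = B ** T1" "x = mpow B (Suc k) ** T1"
        "cadj T2 = T2" "T2 ** B = B ** T2" "y = mpow B (Suc k) ** T2" unfolding S_def by blast
      thus "x + y \<in> S" unfolding S_def
        by (intro CollectI exI[of _ "T1 + T2"]) (simp add: cadj_add matrix_add_ldistrib matrix_add_rdistrib)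
    next
      fix c :: real and x assume "x \<in> S"
      then obtain T where "cadj T = T" "T ** B = B ** T" "x = mpow B (Suc k) ** T" unfolding S_def by blast
      thus "c *\<^sub>R x \<in> S" unfolding S_def
        by (intro CollectI exI[of _ "c *\<^sub>R T"]) (simp add: cadj_scaleR matrix_scalar_ac scalar_matrix_assoc[symmetric])
    qed
  qed
  ultimately obtain T where T: "cadj T = T" "T ** B = B ** T" "mpow B k = mpow B (Suc k) ** T"
    unfolding S_def by blast
  have "mpow B (Suc k) = B ** (mpow B (Suc k) ** T)"
    using T(3) by simp
  also have "\<dots> = mpow B (Suc k) ** B ** T"
    by (simp add: matrix_mul_assoc mpow_comm)
  finally have e: "mpow B (Suc k) ** B ** T = mpow B (Suc k)" by simp
  hence "mpow B (Suc k) ** (mat 1 - B ** T) = 0"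
    by (simp add: matrix_sub_ldistrib matrix_mul_assoc)
  hence "B ** (mat 1 - B ** T) = 0" by (rule herm_cancel_pow[OF cB])
  hence "B = B ** B ** T" by (simp add: matrix_sub_ldistrib matrix_mul_assoc)
  thus ?thesis using T by blast
qed

lemma mp_exists: "\<exists>G. is_mp_inverse (A::complex^'n^'m) G"
proof -
  define B where "B = cadj A ** A"
  have cB: "cadj B = B" by (simp add: B_def cadj_mult)
  obtain T where cT: "cadj T = T" and TB: "T ** B = B ** T" and BT: "B = B ** B ** T"
    using key_poly[OF cB] by blast
  define X where "X = T ** cadj A"
  define D where "D = A ** T ** B - A"
  have "cadj A ** D = B ** T ** B - B"
    by (simp add: D_def B_def matrix_sub_ldistrib matrix_mul_assoc)
  also have "\<dots> = 0"
  proof -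
    have "B ** T ** B = B ** (B ** T)" using TB by (simp add: matrix_mul_assoc[symmetric])
    also have "\<dots> = B" using BT[symmetric] by (simp add: matrix_mul_assoc)
    finally show ?thesis by simp
  qed
  finally have AD: "cadj A ** D = 0" .
  have "cadj D ** D = B ** T ** (cadj A ** D) - cadj A ** D"
    using cB cT by (simp add: D_def cadj_diff cadj_mult matrix_sub_rdistrib matrix_mul_assoc)
  hence "cadj D ** D = 0" using AD by simp
  hence "D = 0" by (rule cadj_self_zero)
  hence AXA: "A ** X ** A = A" by (simp add: D_def X_def B_def matrix_mul_assoc)
  have XA: "cadj (X ** A) = X ** A"
  proof -
    have "X ** A = T ** B" by (simp add: X_def B_def matrix_mul_assoc)
    thus ?thesis using cB cT TB by (simp add: cadj_mult)
  qed
  have AX: "cadj (A ** X) = A ** X"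
    using cT by (simp add: X_def cadj_mult matrix_mul_assoc)
  have "cadj A ** (A ** X) = cadj A ** cadj (A ** X)" using AX by simp
  also have "\<dots> = cadj (A ** X ** A)" by (simp add: cadj_mult)
  also have "\<dots> = cadj A" using AXA by simp
  finally have "X ** A ** X = X"
    by (simp add: X_def matrix_mul_assoc[symmetric])
  thus ?thesis using AXA XA AX unfolding is_mp_inverse_def by blast
qed



lemma mp_unique:
  assumes 1: "is_mp_inverse A G1" and 2: "is_mp_inverse A G2"
  shows "G1 = G2"
proof -
  from 1 have a1: "A**G1**A = A" and g1: "G1**A**G1 = G1" and h1: "cadj(G1**A) = G1**A"
    and k1: "cadj(A**G1) = A**G1" by (auto simp: is_mp_inverse_def)
  from 2 have a2: "A**G2**A = A" and g2: "G2**A**G2 = G2" and h2: "cadj(G2**A) = G2**A"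
    and k2: "cadj(A**G2) = A**G2" by (auto simp: is_mp_inverse_def)
  have cA: "cadj A = cadj A ** cadj G2 ** cadj A"
    using arg_cong[OF a2, of cadj] by (simp add: cadj_mult matrix_mul_assoc)
  have cA': "cadj A = cadj A ** cadj G1 ** cadj A"
    using arg_cong[OF a1, of cadj] by (simp add: cadj_mult matrix_mul_assoc)
  have "G1 = G1 ** (A ** G1)" using g1 by (simp add: matrix_mul_assoc)
  also have "\<dots> = G1 ** cadj G1 ** cadj A" using k1 by (metis cadj_mult matrix_mul_assoc)
  also have "\<dots> = G1 ** cadj G1 ** (cadj A ** cadj G2 ** cadj A)" using cA by simp
  also have "\<dots> = G1 ** cadj (A ** G1) ** cadj (A ** G2)" by (simp add: cadj_mult matrix_mul_assoc)
  also have "\<dots> = G1 ** A ** G1 ** A ** G2" using k1 k2 by (simp add: matrix_mul_assoc)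
  also have "\<dots> = G1 ** A ** G2" using g1 by simp
  finally have e1: "G1 = G1 ** A ** G2" .
  have "G2 = (G2 ** A) ** G2" using g2 by (simp add: matrix_mul_assoc)
  also have "\<dots> = cadj A ** cadj G2 ** G2" using h2 by (metis cadj_mult)
  also have "\<dots> = (cadj A ** cadj G1 ** cadj A) ** cadj G2 ** G2" using cA' by simp
  also have "\<dots> = cadj (G1 ** A) ** cadj (G2 ** A) ** G2" by (simp add: cadj_mult matrix_mul_assoc)
  also have "\<dots> = G1 ** A ** (G2 ** A ** G2)" using h1 h2 by (simp add: matrix_mul_assoc)
  also have "\<dots> = G1 ** A ** G2" using g2 by simp
  finally show ?thesis using e1 by simp
qed

lemma mp_inverse_is:
  assumes "is_mp_inverse A G" shows "is_mp_inverse A (mp_inverse A)"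
  unfolding mp_inverse_def using assms mp_unique by (metis theI)

lemma mp_inverse_herm:
  assumes "is_mp_inverse A G" and "cadj A = A"
  shows "cadj (mp_inverse A) = mp_inverse A"
proof -
  let ?Y = "mp_inverse A"
  have Y: "is_mp_inverse A ?Y" by (rule mp_inverse_is[OF assms(1)])
  have "is_mp_inverse A (cadj ?Y)"
    using Y assms(2) unfolding is_mp_inverse_def
    by (metis cadj_mult cadj_cadj matrix_mul_assoc)
  thus ?thesis using Y mp_unique by blast
qed




theorem mainTheorem2:
  fixes \<Lambda> :: "complex ^'N ^'m" and \<pi> :: "complex ^'N ^'N"
  assumes diag: "\<forall>i j. i \<noteq> j \<longrightarrow> \<pi> $ i $ j = 0"
    and pos: "\<forall>i. \<pi> $ i $ i \<in> \<real> \<and> Re (\<pi> $ i $ i) > 0"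
  shows "let Gmp = mp_inverse \<Lambda>; M = Gmp ** \<Lambda>;
             Gopt = Gmp - mp_inverse ((mat 1 - M) ** \<pi> ** (mat 1 - M)) ** \<pi> ** M ** Gmp
         in \<Lambda> ** Gopt ** \<Lambda> = \<Lambda> \<and> \<pi> ** Gopt ** \<Lambda> = cadj \<Lambda> ** cadj Gopt ** \<pi>"
proof -
  define G where "G = mp_inverse \<Lambda>"
  define M where "M = G ** \<Lambda>"
  define P where "P = mat 1 - M"
  define X where "X = P ** \<pi> ** P"
  define Y where "Y = mp_inverse X"
  define Gopt where "Gopt = G - Y ** \<pi> ** M ** G"
  have GI: "is_mp_inverse \<Lambda> G" unfolding G_def using mp_exists mp_inverse_is by blast
  have YI: "is_mp_inverse X Y" unfolding Y_def using mp_exists mp_inverse_is by blast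
  have "cnj (\<pi> $ j $ i) = \<pi> $ i $ j" for i j
    by (cases "i = j") (use diag pos in \<open>auto simp: Reals_cnj_iff\<close>)
  hence cpi: "cadj \<pi> = \<pi>" by (simp add: vec_eq_iff)
  have cM: "cadj M = M" using GI by (simp add: M_def is_mp_inverse_def)
  have MM: "M ** M = M" using GI by (simp add: M_def is_mp_inverse_def matrix_mul_assoc)
  have cP: "cadj P = P" using cM by (simp add: P_def cadj_diff)
  have PP: "P ** P = P" using MM by (simp add: P_def matrix_sub_ldistrib matrix_sub_rdistrib)
  have LP: "\<Lambda> ** P = 0" using GI
    by (simp add: P_def M_def matrix_sub_ldistrib is_mp_inverse_def matrix_mul_assoc)
  have cX: "cadj X = X" using cP cpi by (simp add: X_def cadj_mult matrix_mul_assoc)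
  have cY: "cadj Y = Y" using mp_inverse_herm[OF _ cX] mp_exists by (metis Y_def)
  have Y1: "Y ** X ** Y = Y" and Y3: "cadj (Y ** X) = Y ** X" and X1: "X ** Y ** X = X"
    using YI by (auto simp: is_mp_inverse_def)
  have PY: "P ** Y = Y"
  proof -
    have "Y = cadj (Y ** X) ** Y" using Y1 Y3 by simp
    also have "\<dots> = P ** (\<pi> ** P ** Y ** Y)" using cX cY by (simp add: cadj_mult X_def matrix_mul_assoc)
    finally have e: "Y = P ** (\<pi> ** P ** Y ** Y)" .
    have "P ** Y = (P ** P) ** (\<pi> ** P ** Y ** Y)" by (subst e, simp add: matrix_mul_assoc)
    thus ?thesis using PP e by simp
  qed
  have YP: "Y ** P = Y" using arg_cong[OF PY, of cadj] cP cY by (simp add: cadj_mult)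
  have LY: "\<Lambda> ** Y = 0" by (metis PY LP matrix_mul_assoc times0_left)
  have YX: "Y ** X = P"
  proof -
    define Q where "Q = mat 1 - Y ** X"
    have XQ: "X ** Q = 0" using X1 by (simp add: Q_def matrix_sub_ldistrib matrix_mul_assoc)
    have "cadj (P ** Q) ** \<pi> ** (P ** Q) = cadj Q ** (X ** Q)"
      using cP by (simp add: cadj_mult X_def matrix_mul_assoc)
    also have "\<dots> = 0" using XQ by simp
    finally have "P ** Q = 0" using cadj_pd_zero[OF diag pos] by blast
    hence "P = P ** Y ** X" by (simp add: Q_def matrix_sub_ldistrib matrix_mul_assoc)
    thus ?thesis using PY by simp
  qed
  have YpM: "Y ** \<pi> ** M = Y ** \<pi> - P"
  proof -
    have "M = mat 1 - P" by (simp add: P_def)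
    hence "Y ** \<pi> ** M = Y ** \<pi> - Y ** \<pi> ** P" by (simp add: matrix_sub_ldistrib)
    also have "Y ** \<pi> ** P = Y ** X" using YP by (metis X_def matrix_mul_assoc)
    finally show ?thesis using YX by simp
  qed
  have GL: "Gopt ** \<Lambda> = mat 1 - Y ** \<pi>"
  proof -
    have "Gopt ** \<Lambda> = M - Y ** \<pi> ** (M ** M)"
      by (simp add: Gopt_def M_def matrix_sub_rdistrib matrix_mul_assoc)
    also have "\<dots> = M - (Y ** \<pi> - P)" using MM YpM by simp
    also have "\<dots> = mat 1 - Y ** \<pi>" by (simp add: P_def)
    finally show ?thesis .
  qed
  have part1: "\<Lambda> ** Gopt ** \<Lambda> = \<Lambda>"
    using LY by (simp add: GL matrix_mul_assoc[symmetric] matrix_sub_ldistrib)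
       (simp add: matrix_mul_assoc)
  have part2: "\<pi> ** Gopt ** \<Lambda> = cadj \<Lambda> ** cadj Gopt ** \<pi>"
  proof -
    have "cadj \<Lambda> ** cadj Gopt ** \<pi> = cadj (Gopt ** \<Lambda>) ** \<pi>" by (simp add: cadj_mult)
    also have "\<dots> = (mat 1 - \<pi> ** Y) ** \<pi>" using cpi cY by (simp add: GL cadj_diff cadj_mult)
    also have "\<dots> = \<pi> ** (mat 1 - Y ** \<pi>)" by (simp add: matrix_sub_rdistrib matrix_sub_ldistrib matrix_mul_assoc)
    finally show ?thesis by (simp add: GL matrix_mul_assoc[symmetric])
  qed
  show ?thesis unfolding Let_def using part1 part2
    by (simp add: G_def[symmetric] M_def[symmetric] P_def[symmetric] X_def[symmetric] Y_def[symmetric] Gopt_def[symmetric])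
qed

end
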